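(* Let $P$ be a $\sigma$-liminf-centered poset. Then $P$ does not add a dominating real. In fact, $P$ preserves unboundedness of all subsets of $\omega^\omega$: if $F\subset\omega^\omega$ is unbounded in the modulo-finite domination order, then $P$ forces that $F$ remains unbounded.
   Context: For a poset $P$, a set $A\subset P$ is liminf centered if for every sequence $\langle p_i\colon i\in\omega\rangle$ of elements of $A$ there is $q\in P$ such that for every $r\leq q$ the set $\{i\in\omega\colon p_i$ is compatible with $r\}$ is infinite. $P$ is $\sigma$-liminf-centered if it is a countable union of liminf centered sets. A dominating real is an element of $\omega^\omega$ in the extension dominating modulo finite every ground model element of $\omega^\omega$. *)

theory Defs
  imports Main
begin

text \<open>A forcing poset is given by a carrier set P and an order le (le q p: q is stronger than p).\<close>

definition is_poset :: "'a set \<Rightarrow> ('a \<Rightarrow> 'a \<Rightarrow> bool) \<Rightarrow> bool" where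
  "is_poset P le \<longleftrightarrow> (\<forall>p\<in>P. le p p)
     \<and> (\<forall>p\<in>P. \<forall>q\<in>P. \<forall>r\<in>P. le p q \<longrightarrow> le q r \<longrightarrow> le p r)
     \<and> (\<forall>p\<in>P. \<forall>q\<in>P. le p q \<longrightarrow> le q p \<longrightarrow> p = q)"

definition compat :: "'a set \<Rightarrow> ('a \<Rightarrow> 'a \<Rightarrow> bool) \<Rightarrow> 'a \<Rightarrow> 'a \<Rightarrow> bool" where
  "compat P le p q \<longleftrightarrow> (\<exists>s\<in>P. le s p \<and> le s q)"

definition liminf_centered :: "'a set \<Rightarrow> ('a \<Rightarrow> 'a \<Rightarrow> bool) \<Rightarrow> 'a set \<Rightarrow> bool" where
  "liminf_centered P le A \<longleftrightarrow> A \<subseteq> P \<and>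
     (\<forall>ps :: nat \<Rightarrow> 'a. (\<forall>i. ps i \<in> A) \<longrightarrow>
        (\<exists>q\<in>P. \<forall>r\<in>P. le r q \<longrightarrow> infinite {i. compat P le (ps i) r}))"

definition sigma_liminf_centered :: "'a set \<Rightarrow> ('a \<Rightarrow> 'a \<Rightarrow> bool) \<Rightarrow> bool" where
  "sigma_liminf_centered P le \<longleftrightarrow>
     (\<exists>C :: nat \<Rightarrow> 'a set. P = (\<Union>i. C i) \<and> (\<forall>i. liminf_centered P le (C i)))"

definition unbounded :: "(nat \<Rightarrow> nat) set \<Rightarrow> bool" where
  "unbounded F \<longleftrightarrow> \<not> (\<exists>g :: nat \<Rightarrow> nat. \<forall>f\<in>F. \<exists>k. \<forall>n\<ge>k. f n \<le> g n)"

text \<open>A P-name for an element of omega^omega, coded by its decision sets: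
  D n m is a set of conditions each forcing "x(n) = m". Every name for a real yields such a D (take D n m to be the
  set of conditions forcing x(n) = m), and every such D is realised by a name
  (the name whose value at n is m iff the generic meets D n m).\<close>

definition real_name :: "'a set \<Rightarrow> ('a \<Rightarrow> 'a \<Rightarrow> bool) \<Rightarrow> (nat \<Rightarrow> nat \<Rightarrow> 'a set) \<Rightarrow> bool" where
  "real_name P le D \<longleftrightarrow> (\<forall>n m. D n m \<subseteq> P)
     \<and> (\<forall>n m m' p q. p \<in> D n m \<longrightarrow> q \<in> D n m' \<longrightarrow> m \<noteq> m' \<longrightarrow> \<not> compat P le p q)
     \<and> (\<forall>n. \<forall>p\<in>P. \<exists>q\<in>P. le q p \<and> (\<exists>m. q \<in> D n m))"

text \<open>q forces "there are infinitely many n with f(n) > x(n)", i.e. q forces that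
  f is not dominated by the real named by D.\<close>

definition forces_not_dominated ::
  "'a set \<Rightarrow> ('a \<Rightarrow> 'a \<Rightarrow> bool) \<Rightarrow> (nat \<Rightarrow> nat \<Rightarrow> 'a set) \<Rightarrow> 'a \<Rightarrow> (nat \<Rightarrow> nat) \<Rightarrow> bool" where
  "forces_not_dominated P le D q f \<longleftrightarrow>
     (\<forall>k. \<forall>r\<in>P. le r q \<longrightarrow> (\<exists>s\<in>P. le s r \<and> (\<exists>n\<ge>k. \<exists>m<f n. s \<in> D n m)))"

text \<open>P forces "F is unbounded": for every name x for a real, densely many
  conditions force that some f in F is not dominated by x.\<close>

definition preserves_unbounded :: "'a set \<Rightarrow> ('a \<Rightarrow> 'a \<Rightarrow> bool) \<Rightarrow> (nat \<Rightarrow> nat) set \<Rightarrow> bool" where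
  "preserves_unbounded P le F \<longleftrightarrow>
     (\<forall>D. real_name P le D \<longrightarrow>
        (\<forall>p\<in>P. \<exists>q\<in>P. le q p \<and> (\<exists>f\<in>F. forces_not_dominated P le D q f)))"

text \<open>q forces "f \<le>* x": some k such that q forces x(n) \<ge> f(n) for all n \<ge> k.\<close>

definition forces_dominated ::
  "'a set \<Rightarrow> ('a \<Rightarrow> 'a \<Rightarrow> bool) \<Rightarrow> (nat \<Rightarrow> nat \<Rightarrow> 'a set) \<Rightarrow> 'a \<Rightarrow> (nat \<Rightarrow> nat) \<Rightarrow> bool" where
  "forces_dominated P le D q f \<longleftrightarrow>
     (\<exists>k. \<forall>n\<ge>k. \<forall>s\<in>P. le s q \<longrightarrow> (\<forall>m. s \<in> D n m \<longrightarrow> f n \<le> m))"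

text \<open>P adds a dominating real: some condition p forces that the real named by D
  dominates every ground-model real (p forces phi iff densely many below p force phi).\<close>

definition adds_dominating_real :: "'a set \<Rightarrow> ('a \<Rightarrow> 'a \<Rightarrow> bool) \<Rightarrow> bool" where
  "adds_dominating_real P le \<longleftrightarrow>
     (\<exists>D. real_name P le D \<and>
        (\<exists>p\<in>P. \<forall>f :: nat \<Rightarrow> nat. \<forall>r\<in>P. le r p \<longrightarrow>
            (\<exists>q\<in>P. le q r \<and> forces_dominated P le D q f)))"

end

theory Submission
  imports Defs
begin

definition fge :: "'a set \<Rightarrow> ('a \<Rightarrow> 'a \<Rightarrow> bool) \<Rightarrow> (nat \<Rightarrow> nat \<Rightarrow> 'a set) \<Rightarrow> 'a \<Rightarrow> nat \<Rightarrow> nat \<Rightarrow> bool" where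
  "fge P le D r n M \<longleftrightarrow> (\<forall>s\<in>P. le s r \<longrightarrow> (\<forall>m. s \<in> D n m \<longrightarrow> M \<le> m))"

lemma keyA:
  assumes po: "is_poset P le" and lc: "liminf_centered P le A" and rn: "real_name P le D"
  shows "\<exists>M. \<forall>r\<in>A. \<not> fge P le D r n M"
proof (rule ccontr)
  assume "\<not> ?thesis"
  then have "\<forall>M. \<exists>r\<in>A. fge P le D r n M" by blast
  then have "\<exists>ps. \<forall>M. ps M \<in> A \<and> fge P le D (ps M) n M" using choice[of "\<lambda>M r. r \<in> A \<and> fge P le D r n M"] by blast
  then obtain ps where ps: "\<And>M. ps M \<in> A \<and> fge P le D (ps M) n M" by blast
  have AP: "A \<subseteq> P" using lc unfolding liminf_centered_def by blast
  obtain q where q: "q \<in> P" "\<forall>r\<in>P. le r q \<longrightarrow> infinite {i. compat P le (ps i) r}"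
    using lc ps unfolding liminf_centered_def by blast
  obtain s m0 where s: "s \<in> P" "le s q" "s \<in> D n m0"
    using rn q(1) unfolding real_name_def by blast
  have "infinite {i. compat P le (ps i) s}" using q s by blast
  then obtain M where M: "M > m0" "compat P le (ps M) s"
    unfolding finite_nat_set_iff_bounded_le by (metis mem_Collect_eq not_le)
  then obtain t where t: "t \<in> P" "le t (ps M)" "le t s" unfolding compat_def by blast
  obtain t' m' where t': "t' \<in> P" "le t' t" "t' \<in> D n m'"
    using rn t(1) unfolding real_name_def by blast
  have psP: "ps M \<in> P" using ps AP by blast
  have tr: "\<And>a b c. a\<in>P \<Longrightarrow> b\<in>P \<Longrightarrow> c\<in>P \<Longrightarrow> le a b \<Longrightarrow> le b c \<Longrightarrow> le a c"
    using po unfolding is_poset_def by blast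
  have rf: "le t' t'" using po t'(1) unfolding is_poset_def by blast
  have ts: "le t' s" using tr[OF t'(1) t(1) s(1) t'(2) t(3)] .
  have tp: "le t' (ps M)" using tr[OF t'(1) t(1) psP t'(2) t(2)] .
  have "compat P le s t'" unfolding compat_def using t'(1) ts rf by blast
  then have "m' = m0" using rn s(3) t'(3) unfolding real_name_def by metis
  then have "M \<le> m0" using ps[of M] t' tp unfolding fge_def by blast
  then show False using M by simp
qed

lemma mainB:
  assumes po: "is_poset P le" and sl: "sigma_liminf_centered P le"
    and rn: "real_name P le D" and ub: "unbounded F" and p: "p \<in> P"
  shows "\<exists>q\<in>P. le q p \<and> (\<exists>f\<in>F. forces_not_dominated P le D q f)"
proof (rule ccontr)
  assume na: "\<not> ?thesis"
  have "\<exists>C :: nat \<Rightarrow> 'a set. P = (\<Union>i. C i) \<and> (\<forall>i. liminf_centered P le (C i))"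
    using sl unfolding sigma_liminf_centered_def .
  then obtain C :: "nat \<Rightarrow> 'a set" where Cu: "P = (\<Union>i. C i)" and Cl: "\<forall>i. liminf_centered P le (C i)"
    by (elim exE conjE)
  have C2: "liminf_centered P le (C i)" for i using Cl by (rule spec)
  have Cx: "\<exists>i. x \<in> C i" if "x \<in> P" for x using that unfolding Cu by (rule UN_E) (rule exI)
  have pp: "le p p" using po p unfolding is_poset_def by blast
  have ex: "\<exists>i k. \<exists>r\<in>C i. \<forall>n\<ge>k. fge P le D r n (f n)" if f: "f \<in> F" for f
  proof -
    have "\<not> forces_not_dominated P le D p f"
    proof
      assume "forces_not_dominated P le D p f"
      then have "\<exists>q\<in>P. le q p \<and> (\<exists>f\<in>F. forces_not_dominated P le D q f)" using p pp f by blast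
      then show False using na by simp
    qed
    then obtain k r where r: "r \<in> P" "\<forall>s\<in>P. le s r \<longrightarrow> \<not>(\<exists>n\<ge>k. \<exists>m<f n. s \<in> D n m)"
      unfolding forces_not_dominated_def by blast
    then obtain i where "r \<in> C i" using Cx by blast
    moreover have "\<forall>n\<ge>k. fge P le D r n (f n)"
      unfolding fge_def
    proof (intro allI impI ballI)
      fix n s m assume "k \<le> n" "s \<in> P" "le s r" "s \<in> D n m"
      then show "f n \<le> m" using r(2) not_le by blast
    qed
    ultimately show ?thesis by blast
  qed
  define G where "G i n = (LEAST M. \<forall>r\<in>C i. \<not> fge P le D r n M)" for i n
  have GP: "\<forall>r\<in>C i. \<not> fge P le D r n (G i n)" for i n
    unfolding G_def using keyA[OF po C2 rn] by (rule LeastI_ex)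
  have lt: "f n < G i n" if "r \<in> C i" "fge P le D r n (f n)" for r i n f
  proof (rule ccontr)
    assume "\<not> f n < G i n"
    then have "fge P le D r n (G i n)" using that(2) unfolding fge_def
      by (meson le_trans not_le)
    then show False using GP that(1) by blast
  qed
  define g where "g n = (\<Sum>i\<le>n. G i n)" for n
  have "\<forall>f\<in>F. \<exists>k. \<forall>n\<ge>k. f n \<le> g n"
  proof
    fix f assume "f \<in> F"
    then obtain i k r where r: "r \<in> C i" "\<forall>n\<ge>k. fge P le D r n (f n)" using ex by blast
    have "f n \<le> g n" if "n \<ge> max k i" for n
    proof -
      have "f n < G i n" using lt r that by simp
      also have "G i n \<le> g n" unfolding g_def
        using that by (intro member_le_sum) auto
      finally show ?thesis by simp
    qed
    then show "\<exists>k. \<forall>n\<ge>k. f n \<le> g n" by blast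
  qed
  then show False using ub unfolding unbounded_def by blast
qed

theorem theorem3p8:
  fixes P :: "'a set" and le :: "'a \<Rightarrow> 'a \<Rightarrow> bool"
  assumes "is_poset P le"
    and "sigma_liminf_centered P le"
  shows "\<not> adds_dominating_real P le
     \<and> (\<forall>F :: (nat \<Rightarrow> nat) set. unbounded F \<longrightarrow> preserves_unbounded P le F)"
proof
  show pu: "\<forall>F :: (nat \<Rightarrow> nat) set. unbounded F \<longrightarrow> preserves_unbounded P le F"
    using mainB[OF assms] unfolding preserves_unbounded_def by blast
  show "\<not> adds_dominating_real P le"
  proof
    assume "adds_dominating_real P le"
    then obtain D p where D: "real_name P le D" and p: "p \<in> P"
      and dom: "\<forall>f :: nat \<Rightarrow> nat. \<forall>r\<in>P. le r p \<longrightarrow> (\<exists>q\<in>P. le q r \<and> forces_dominated P le D q f)"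
      unfolding adds_dominating_real_def by blast
    have "unbounded (UNIV :: (nat \<Rightarrow> nat) set)"
      unfolding unbounded_def
    proof
      assume "\<exists>g :: nat \<Rightarrow> nat. \<forall>f\<in>UNIV. \<exists>k. \<forall>n\<ge>k. f n \<le> g n"
      then obtain g :: "nat \<Rightarrow> nat" where "\<forall>f\<in>UNIV. \<exists>k. \<forall>n\<ge>k. f n \<le> g n" by blast
      then have "\<exists>k. \<forall>n\<ge>k. (\<lambda>n. Suc (g n)) n \<le> g n" by (rule bspec) simp
      then obtain k where "\<forall>n\<ge>k. Suc (g n) \<le> g n" by auto
      then have "Suc (g k) \<le> g k" by blast
      then show False by simp
    qed
    then obtain q f where q: "q \<in> P" "le q p" and fnd: "forces_not_dominated P le D q f"
      using mainB[OF assms D _ p] by blast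
    obtain q' where q': "q' \<in> P" "le q' q" "forces_dominated P le D q' f" using dom q by blast
    then obtain k where k: "\<forall>n\<ge>k. \<forall>s\<in>P. le s q' \<longrightarrow> (\<forall>m. s \<in> D n m \<longrightarrow> f n \<le> m)"
      unfolding forces_dominated_def by blast
    obtain s n m where "s \<in> P" "le s q'" "n \<ge> k" "m < f n" "s \<in> D n m"
      using fnd q' unfolding forces_not_dominated_def by blast
    then show False using k by fastforce
  qed
qed

end
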